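(* Let $(O,m_0)$ be an occurrence net with its initial marking $m_0$. For every marking $m$: $(\overleftarrow O,m_0)\to^*(\overleftarrow O,m)$ if and only if $(\overleftarrow O,m_0)\rightharpoonup^*(\overleftarrow O,m)$, where $\to^*$ denotes a finite sequence of forward and/or backward firings and $\rightharpoonup^*$ a finite sequence of forward firings only.
   Context: A net has places, transitions, and nonempty preset/postset sets ${}^\bullet\mathsf t,\mathsf t^\bullet$ for each transition; markings are multisets of places; firing rule: if ${}^\bullet\mathsf t=m$, $\mathsf t^\bullet=m'$ then $(N,m\oplus m'')\xrightarrow{\mathsf t}(N,m'\oplus m'')$. With $\prec=\{(a,\mathsf t)\mid a\in{}^\bullet\mathsf t\}\cup\{(\mathsf t,a)\mid a\in\mathsf t^\bullet\}$ and $\preceq$ its reflexive-transitive closure, an occurrence net is a marked net $(O,m_0)$ with $\prec$ acyclic, every reachable marking a set, $m_0=\{a\mid{}^\bullet a=\emptyset\}$, $|{}^\bullet a|\le1$ for all places ${}^\bullet a=\{\mathsf t\mid a\in\mathsf t^\bullet\}$, and no transition $\mathsf t$ with $\mathsf t\#\mathsf t$ (where $x\#y$ iff there are distinct-or-not transitions $\mathsf t_1\preceq x,\mathsf t_2\preceq y$ with $\mathsf t_1\neq\mathsf t_2$ and ${}^\bullet\mathsf t_1\cap{}^\bullet\mathsf t_2\ne\emptyset$). The reversible version $\overleftarrow O$ has the same places, transitions $T_O\cup\{\underline{\mathsf t}\mid\mathsf t\in T_O\}$, forward transitions keep their pre/postsets, and ${}^\bullet\underline{\mathsf t}=\mathsf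 t^\bullet$, $\underline{\mathsf t}^\bullet={}^\bullet\mathsf t$. Firings of forward transitions $\mathsf t\in T_O$ are forward firings ($\rightharpoonup$), of reverse transitions backward firings. *)

theory Defs
  imports Main "HOL-Library.Multiset"
begin

record ('p, 't) net =
  places :: "'p set"
  trans  :: "'t set"
  pre    :: "'t \<Rightarrow> 'p set"
  post   :: "'t \<Rightarrow> 'p set"

definition net_wf :: "('p, 't) net \<Rightarrow> bool" where
  "net_wf N \<longleftrightarrow> (\<forall>t \<in> trans N.
      pre N t \<noteq> {} \<and> post N t \<noteq> {} \<and> finite (pre N t) \<and> finite (post N t) \<and>
      pre N t \<subseteq> places N \<and> post N t \<subseteq> places N)"

definition fire :: "('p, 't) net \<Rightarrow> 't \<Rightarrow> 'p multiset \<Rightarrow> 'p multiset \<Rightarrow> bool" where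
  "fire N t m m' \<longleftrightarrow> t \<in> trans N \<and>
     (\<exists>m''. m = mset_set (pre N t) + m'' \<and> m' = mset_set (post N t) + m'')"

definition step :: "('p, 't) net \<Rightarrow> 'p multiset \<Rightarrow> 'p multiset \<Rightarrow> bool" where
  "step N m m' \<longleftrightarrow> (\<exists>t. fire N t m m')"

definition place_pre :: "('p, 't) net \<Rightarrow> 'p \<Rightarrow> 't set" where
  "place_pre N a = {t \<in> trans N. a \<in> post N t}"

definition flow :: "('p, 't) net \<Rightarrow> ('p + 't) rel" where
  "flow N = {(Inl a, Inr t) | a t. t \<in> trans N \<and> a \<in> pre N t}
          \<union> {(Inr t, Inl a) | a t. t \<in> trans N \<and> a \<in> post N t}"

definition conflict :: "('p, 't) net \<Rightarrow> ('p + 't) \<Rightarrow> ('p + 't) \<Rightarrow> bool" where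
  "conflict N x y \<longleftrightarrow> (\<exists>t1 \<in> trans N. \<exists>t2 \<in> trans N.
      (Inr t1, x) \<in> (flow N)\<^sup>* \<and> (Inr t2, y) \<in> (flow N)\<^sup>* \<and>
      t1 \<noteq> t2 \<and> pre N t1 \<inter> pre N t2 \<noteq> {})"

definition is_set_marking :: "'p multiset \<Rightarrow> bool" where
  "is_set_marking m \<longleftrightarrow> (\<forall>a. count m a \<le> 1)"

definition occurrence_net :: "('p, 't) net \<Rightarrow> 'p multiset \<Rightarrow> bool" where
  "occurrence_net N m0 \<longleftrightarrow>
     net_wf N \<and>
     acyclic (flow N) \<and>
     finite {a \<in> places N. place_pre N a = {}} \<and>
     m0 = mset_set {a \<in> places N. place_pre N a = {}} \<and>
     (\<forall>m. (step N)\<^sup>*\<^sup>* m0 m \<longrightarrow> is_set_marking m) \<and>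
     (\<forall>a \<in> places N. card (place_pre N a) \<le> 1 \<and> finite (place_pre N a)) \<and>
     (\<forall>t \<in> trans N. \<not> conflict N (Inr t) (Inr t))"

text \<open>Reversible version: forward transitions Inl t, reverse transitions Inr t.\<close>
definition rev_net :: "('p, 't) net \<Rightarrow> ('p, 't + 't) net" where
  "rev_net N = \<lparr> places = places N,
                 trans = Inl ` trans N \<union> Inr ` trans N,
                 pre = case_sum (pre N) (post N),
                 post = case_sum (post N) (pre N) \<rparr>"

definition fwd_step :: "('p, 't + 't) net \<Rightarrow> 'p multiset \<Rightarrow> 'p multiset \<Rightarrow> bool" where
  "fwd_step R m m' \<longleftrightarrow> (\<exists>t. fire R (Inl t) m m')"

end

theory Submission
  imports Defs
begin

lemma fire_Inl: "fire (rev_net N) (Inl t) m m' \<longleftrightarrow> t \<in> trans N \<and>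
   (\<exists>x. m = mset_set (pre N t) + x \<and> m' = mset_set (post N t) + x)"
  by (auto simp: fire_def rev_net_def)

lemma fire_Inr: "fire (rev_net N) (Inr t) m m' \<longleftrightarrow> t \<in> trans N \<and>
   (\<exists>x. m = mset_set (post N t) + x \<and> m' = mset_set (pre N t) + x)"
  by (auto simp: fire_def rev_net_def)

lemma post_disj:
  assumes "occurrence_net N m0" "t \<in> trans N" "t1 \<in> trans N" "t \<noteq> t1"
  shows "post N t \<inter> post N t1 = {}"
proof (rule ccontr)
  assume "post N t \<inter> post N t1 \<noteq> {}"
  then obtain a where a: "a \<in> post N t" "a \<in> post N t1" by blast
  have "a \<in> places N" using assms a unfolding occurrence_net_def net_wf_def by blast
  then have "card (place_pre N a) \<le> 1" "finite (place_pre N a)"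
    using assms(1) unfolding occurrence_net_def by auto
  moreover have "{t, t1} \<subseteq> place_pre N a" using a assms by (auto simp: place_pre_def)
  ultimately have "card {t,t1} \<le> 1" by (meson card_mono order_trans)
  thus False using assms(4) by simp
qed

lemma sub_disj:
  assumes "finite A" "finite B" "A \<inter> B = {}" "mset_set A + y = mset_set B + x"
  shows "mset_set A \<subseteq># x"
proof (rule mset_subset_eqI)
  fix a
  have "count (mset_set A) a + count y a = count (mset_set B) a + count x a"
    using assms(4) by (metis count_union)
  thus "count (mset_set A) a \<le> count x a"
    using assms(1-3) by (cases "a \<in> A"; cases "a \<in> B") (auto simp: count_mset_set' simp del: count_mset_set dest: sym intro: count_inI)
qed

lemma back_closed:
  assumes occ: "occurrence_net N m0"
    and r: "(fwd_step (rev_net N))\<^sup>*\<^sup>* m0 m"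
  shows "\<And>t y. t \<in> trans N \<Longrightarrow> m = mset_set (post N t) + y \<Longrightarrow>
     (fwd_step (rev_net N))\<^sup>*\<^sup>* m0 (mset_set (pre N t) + y)"
  using r
proof (induction rule: rtranclp_induct)
  case base
  obtain a where a: "a \<in> post N t" using occ base(1) unfolding occurrence_net_def net_wf_def by blast
  have ap: "a \<in> places N" using occ a base(1) unfolding occurrence_net_def net_wf_def by blast
  have fin: "finite (post N t)" using occ base(1) unfolding occurrence_net_def net_wf_def by blast
  have "t \<in> place_pre N a" using a base(1) by (auto simp: place_pre_def)
  hence "count m0 a = 0" using occ unfolding occurrence_net_def
    by (auto simp: count_mset_set' simp del: count_mset_set dest: sym intro: count_inI)
  moreover have "count m0 a \<ge> 1" using base(2) a fin by (simp add: count_mset_set)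
  ultimately show ?case by simp
next
  case (step m1 m)
  then obtain t1 x where t1: "t1 \<in> trans N" and m1: "m1 = mset_set (pre N t1) + x"
    and mm: "m = mset_set (post N t1) + x"
    by (auto simp: fwd_step_def fire_Inl)
  have fin: "\<And>t. t \<in> trans N \<Longrightarrow> finite (pre N t) \<and> finite (post N t)"
    using occ unfolding occurrence_net_def net_wf_def by blast
  show ?case
  proof (cases "t = t1")
    case True
    then have "x = y" using mm step.prems by simp
    then show ?thesis using True m1 step.hyps(1) by simp
  next
    case False
    have "post N t \<inter> post N t1 = {}" using post_disj[OF occ step.prems(1) t1 False] .
    then have "mset_set (post N t) \<subseteq># x"
      using sub_disj fin step.prems t1 mm by metis
    then obtain z where z: "x = mset_set (post N t) + z" by (metis mset_subset_eq_exists_conv)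
    have "m1 = mset_set (post N t) + (mset_set (pre N t1) + z)" using m1 z by (simp add: ac_simps)
    from step.IH[OF step.prems(1) this]
    have r1: "(fwd_step (rev_net N))\<^sup>*\<^sup>* m0 (mset_set (pre N t) + (mset_set (pre N t1) + z))" .
    have y: "y = mset_set (post N t1) + z" using step.prems(2) mm z
      by (metis add.left_commute add_left_cancel)
    have "fwd_step (rev_net N) (mset_set (pre N t) + (mset_set (pre N t1) + z)) (mset_set (pre N t) + y)"
      unfolding fwd_step_def fire_Inl using t1 y
      by (intro exI[of _ t1] conjI exI[of _ "mset_set (pre N t) + z"]) (auto simp: ac_simps)
    with r1 show ?thesis by simp
  qed
qed

theorem mainTheorem11:
  fixes Onet :: "('p, 't) net" and m0 m :: "'p multiset"
  assumes "occurrence_net Onet m0"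
  shows "(step (rev_net Onet))\<^sup>*\<^sup>* m0 m \<longleftrightarrow> (fwd_step (rev_net Onet))\<^sup>*\<^sup>* m0 m"
proof
  assume "(step (rev_net Onet))\<^sup>*\<^sup>* m0 m"
  then show "(fwd_step (rev_net Onet))\<^sup>*\<^sup>* m0 m"
  proof (induction rule: rtranclp_induct)
    case base then show ?case by simp
  next
    case (step m1 m2)
    then obtain u where u: "fire (rev_net Onet) u m1 m2" by (auto simp: Defs.step_def)
    show ?case
    proof (cases u)
      case (Inl t)
      then have "fwd_step (rev_net Onet) m1 m2" using u by (auto simp: fwd_step_def)
      then show ?thesis using step.IH by simp
    next
      case (Inr t)
      then obtain y where "t \<in> trans Onet" "m1 = mset_set (post Onet t) + y"
        "m2 = mset_set (pre Onet t) + y" using u by (auto simp: fire_Inr)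
      then show ?thesis using back_closed[OF assms step.IH] by simp
    qed
  qed
next
  assume "(fwd_step (rev_net Onet))\<^sup>*\<^sup>* m0 m"
  then show "(step (rev_net Onet))\<^sup>*\<^sup>* m0 m"
    by (rule rtranclp_mono[THEN predicate2D, rotated]) (auto simp: fwd_step_def Defs.step_def)
qed

end
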